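(* Let $\mathcal{D}$ be an $S(2,k,v)$ that has a near parallel class. Then $G_1=1$-$\mathrm{BIG}(\mathcal{D})$ is not silver.
   Context: A Steiner $2$-design $S(2,k,v)$ ($2<k<v$) is a pair $(V,\mathcal{B})$ with $|V|=v$ and $\mathcal{B}$ a collection of $k$-subsets of $V$ (blocks) such that every $2$-subset of $V$ lies in exactly one block. A partial parallel class is a set of pairwise disjoint blocks; a near parallel class is a partial parallel class whose union is $V$ minus a single element. The $1$-block intersection graph $1$-$\mathrm{BIG}(\mathcal{D})$ has the blocks as vertices, two blocks adjacent iff they intersect in exactly one element (it is $k(v-k)/(k-1)$-regular). An $\alpha$-set of a graph is a maximum independent set. Let $G$ be an $r$-regular graph and $c$ a proper $(r+1)$-coloring of $G$. A vertex $x$ is rainbow with respect to $c$ if every one of the $r+1$ colors appears on $N[x]=N(x)\cup\{x\}$. Given an $\alpha$-set $I$, $c$ is silver with respect to $I$ if every $x\in I$ is rainbow; $G$ is silver if it admits a silver coloring with respect to some $\alpha$-set. *)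

theory Defs
  imports Main
begin

definition steiner_2_design :: "nat \<Rightarrow> nat \<Rightarrow> 'a set \<Rightarrow> 'a set set \<Rightarrow> bool" where
  "steiner_2_design k v V B \<longleftrightarrow>
     finite V \<and> card V = v \<and> 2 < k \<and> k < v \<and>
     (\<forall>b\<in>B. b \<subseteq> V \<and> card b = k) \<and>
     (\<forall>x\<in>V. \<forall>y\<in>V. x \<noteq> y \<longrightarrow> (\<exists>!b. b \<in> B \<and> {x, y} \<subseteq> b))"

definition partial_parallel_class :: "'a set set \<Rightarrow> 'a set set \<Rightarrow> bool" where
  "partial_parallel_class B P \<longleftrightarrow>
     P \<subseteq> B \<and> (\<forall>b1\<in>P. \<forall>b2\<in>P. b1 \<noteq> b2 \<longrightarrow> b1 \<inter> b2 = {})"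

definition near_parallel_class :: "'a set \<Rightarrow> 'a set set \<Rightarrow> 'a set set \<Rightarrow> bool" where
  "near_parallel_class V B P \<longleftrightarrow>
     partial_parallel_class B P \<and> (\<exists>x\<in>V. \<Union>P = V - {x})"

definition nbhd :: "'v set \<Rightarrow> ('v \<Rightarrow> 'v \<Rightarrow> bool) \<Rightarrow> 'v \<Rightarrow> 'v set" where
  "nbhd Vs E x = {y\<in>Vs. E x y}"

definition closed_nbhd :: "'v set \<Rightarrow> ('v \<Rightarrow> 'v \<Rightarrow> bool) \<Rightarrow> 'v \<Rightarrow> 'v set" where
  "closed_nbhd Vs E x = insert x (nbhd Vs E x)"

definition regular_graph :: "'v set \<Rightarrow> ('v \<Rightarrow> 'v \<Rightarrow> bool) \<Rightarrow> nat \<Rightarrow> bool" where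
  "regular_graph Vs E r \<longleftrightarrow> (\<forall>x\<in>Vs. finite (nbhd Vs E x) \<and> card (nbhd Vs E x) = r)"

definition independent_set :: "'v set \<Rightarrow> ('v \<Rightarrow> 'v \<Rightarrow> bool) \<Rightarrow> 'v set \<Rightarrow> bool" where
  "independent_set Vs E I \<longleftrightarrow> I \<subseteq> Vs \<and> (\<forall>x\<in>I. \<forall>y\<in>I. \<not> E x y)"

definition alpha_set :: "'v set \<Rightarrow> ('v \<Rightarrow> 'v \<Rightarrow> bool) \<Rightarrow> 'v set \<Rightarrow> bool" where
  "alpha_set Vs E I \<longleftrightarrow> independent_set Vs E I \<and> finite I \<and>
     (\<forall>J. independent_set Vs E J \<longrightarrow> finite J \<and> card J \<le> card I)"

definition proper_coloring :: "'v set \<Rightarrow> ('v \<Rightarrow> 'v \<Rightarrow> bool) \<Rightarrow> nat \<Rightarrow> ('v \<Rightarrow> nat) \<Rightarrow> bool" where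
  "proper_coloring Vs E m c \<longleftrightarrow>
     (\<forall>x\<in>Vs. c x < m) \<and> (\<forall>x\<in>Vs. \<forall>y\<in>Vs. E x y \<longrightarrow> c x \<noteq> c y)"

definition rainbow :: "'v set \<Rightarrow> ('v \<Rightarrow> 'v \<Rightarrow> bool) \<Rightarrow> nat \<Rightarrow> ('v \<Rightarrow> nat) \<Rightarrow> 'v \<Rightarrow> bool" where
  "rainbow Vs E m c x \<longleftrightarrow> c ` closed_nbhd Vs E x = {..<m}"

definition silver_coloring :: "'v set \<Rightarrow> ('v \<Rightarrow> 'v \<Rightarrow> bool) \<Rightarrow> nat \<Rightarrow> ('v \<Rightarrow> nat) \<Rightarrow> 'v set \<Rightarrow> bool" where
  "silver_coloring Vs E r c I \<longleftrightarrow>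
     alpha_set Vs E I \<and> proper_coloring Vs E (r + 1) c \<and> (\<forall>x\<in>I. rainbow Vs E (r + 1) c x)"

definition silver :: "'v set \<Rightarrow> ('v \<Rightarrow> 'v \<Rightarrow> bool) \<Rightarrow> bool" where
  "silver Vs E \<longleftrightarrow> (\<exists>r. regular_graph Vs E r \<and> (\<exists>c I. silver_coloring Vs E r c I))"

definition one_BIG_adj :: "'a set \<Rightarrow> 'a set \<Rightarrow> bool" where
  "one_BIG_adj b1 b2 \<longleftrightarrow> b1 \<noteq> b2 \<and> card (b1 \<inter> b2) = 1"

end

theory Submission
  imports Defs
begin
lemma card_filter_sum: "finite A \<Longrightarrow> card {x\<in>A. P x} = (\<Sum>x\<in>A. if P x then 1 else (0::nat))"
  by (simp add: sum.If_cases Int_def conj_commute)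

lemma st_basic:
  assumes "steiner_2_design k v V B"
  shows "finite V" "card V = v" "2<k" "k<v" "\<And>b. b\<in>B \<Longrightarrow> b \<subseteq> V"
        "\<And>b. b\<in>B \<Longrightarrow> card b = k" "finite B" "\<And>b. b\<in>B \<Longrightarrow> finite b"
proof -
  show f: "finite V" using assms unfolding steiner_2_design_def by simp
  show "card V = v" "2<k" "k<v" using assms unfolding steiner_2_design_def by simp_all
  show sub: "\<And>b. b\<in>B \<Longrightarrow> b \<subseteq> V" "\<And>b. b\<in>B \<Longrightarrow> card b = k"
    using assms unfolding steiner_2_design_def by simp_all
  show "finite B" using sub(1) f by (meson Pow_iff finite_Pow_iff finite_subset subsetI)
  show "\<And>b. b\<in>B \<Longrightarrow> finite b" using sub(1) f finite_subset by blast
qed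

lemma st_unique:
  assumes "steiner_2_design k v V B" "b1 \<in> B" "b2 \<in> B" "x \<in> b1" "y \<in> b1" "x \<in> b2" "y \<in> b2" "x \<noteq> y"
  shows "b1 = b2"
proof -
  have "x \<in> V" "y \<in> V" using st_basic(5)[OF assms(1)] assms by blast+
  moreover have "\<forall>x\<in>V. \<forall>y\<in>V. x \<noteq> y \<longrightarrow> (\<exists>!b. b \<in> B \<and> {x, y} \<subseteq> b)"
    using assms(1) unfolding steiner_2_design_def by simp
  ultimately have "\<exists>!b. b \<in> B \<and> {x, y} \<subseteq> b" using assms(8) by blast
  then show ?thesis using assms by blast
qed

lemma st_inter:
  assumes "steiner_2_design k v V B" "b1 \<in> B" "b2 \<in> B" "b1 \<noteq> b2"
  shows "card (b1 \<inter> b2) \<le> 1"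
proof -
  have "finite (b1 \<inter> b2)" using st_basic(8)[OF assms(1) assms(2)] by simp
  then show ?thesis using st_unique[OF assms(1-3)] assms(4)
    by (auto simp: card_le_Suc0_iff_eq)
qed

lemma st_adj:
  assumes "steiner_2_design k v V B" "b1 \<in> B" "b2 \<in> B"
  shows "one_BIG_adj b1 b2 \<longleftrightarrow> b1 \<noteq> b2 \<and> b1 \<inter> b2 \<noteq> {}"
proof -
  have "finite (b1 \<inter> b2)" using st_basic(8)[OF assms(1) assms(2)] by simp
  then show ?thesis using st_inter[OF assms] unfolding one_BIG_adj_def
    by (metis card_0_eq le_antisym less_one not_le)
qed

lemma st_Bq:
  assumes "steiner_2_design k v V B" "q \<in> V"
  shows "card {b\<in>B. q\<in>b} * (k-1) = v-1"
proof -
  let ?Bq = "{b\<in>B. q\<in>b}"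
  have fB: "finite B" using st_basic[OF assms(1)] by blast
  have "V - {q} = \<Union> ((\<lambda>b. b - {q}) ` ?Bq)"
  proof
    show "V - {q} \<subseteq> \<Union> ((\<lambda>b. b - {q}) ` ?Bq)"
    proof
      fix w assume w: "w \<in> V - {q}"
      have "\<forall>x\<in>V. \<forall>y\<in>V. x \<noteq> y \<longrightarrow> (\<exists>!b. b \<in> B \<and> {x, y} \<subseteq> b)"
        using assms(1) unfolding steiner_2_design_def by simp
      then have "\<exists>!b. b \<in> B \<and> {q, w} \<subseteq> b" using w assms(2) by (metis DiffE insertI1)
      then obtain b where "b \<in> B" "{q, w} \<subseteq> b" by auto
      then show "w \<in> \<Union> ((\<lambda>b. b - {q}) ` ?Bq)" using w by blast
    qed
    show "\<Union> ((\<lambda>b. b - {q}) ` ?Bq) \<subseteq> V - {q}" using st_basic(5)[OF assms(1)] by blast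
  qed
  moreover have "card (\<Union> ((\<lambda>b. b - {q}) ` ?Bq)) = (\<Sum>b\<in>?Bq. card (b - {q}))"
  proof (rule card_UN_disjoint)
    show "finite ?Bq" using fB by simp
    show "\<forall>i\<in>?Bq. finite (i - {q})" using st_basic(8)[OF assms(1)] by blast
    show "\<forall>i\<in>?Bq. \<forall>j\<in>?Bq. i \<noteq> j \<longrightarrow> (i - {q}) \<inter> (j - {q}) = {}"
    proof (intro ballI impI)
      fix i j assume "i \<in> ?Bq" "j \<in> ?Bq" "i \<noteq> j"
      then show "(i - {q}) \<inter> (j - {q}) = {}" using st_unique[OF assms(1), of i j q] by auto
    qed
  qed
  moreover have "(\<Sum>b\<in>?Bq. card (b - {q})) = (\<Sum>b\<in>?Bq. k - 1)"
    apply (rule sum.cong) using st_basic(6,8)[OF assms(1)] by (auto simp: card_Diff_singleton)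
  ultimately have "card (V - {q}) = card ?Bq * (k-1)" by simp
  then show ?thesis using st_basic(1,2)[OF assms(1)] assms(2) by simp
qed

lemma a1: fixes cP cI k v :: nat
  assumes "cP*k = v-1" "cP \<le> cI" "cI*k \<le> v" "2<k" shows "cI = cP"
proof (rule ccontr)
  assume "cI \<noteq> cP" then have "Suc cP \<le> cI" using assms by simp
  then have "Suc cP * k \<le> cI * k" by (rule mult_le_mono1)
  then show False using assms by simp
qed
lemma a2: fixes m n k v :: nat
  assumes "m*k = v-1" "k<v" "2<k" "n*(k-1) = v-1" shows "2 \<le> m"
proof (rule ccontr)
  assume "\<not> 2 \<le> m" then have "m = 0 \<or> m = 1" by auto
  then show False
  proof
    assume "m = 0" then show False using assms by simp
  next
    assume m1: "m = 1"
    then have e: "n*(k-1) = k" using assms by simp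
    show False
    proof (cases "n \<le> 1")
      case True then have "n = 0 \<or> n = 1" by auto
      then show False using e assms by auto
    next
      case False then have "2*(k-1) \<le> n*(k-1)" using mult_le_mono1[of 2 n "k-1"] by simp
      then show False using e assms by linarith
    qed
  qed
qed
lemma a3: fixes m n k :: nat
  assumes "n*(k-1) = m*k" "0<m" "2<k" shows "m < n"
proof (rule ccontr)
  assume "\<not> m < n" then have "n*(k-1) \<le> m*(k-1)" using mult_le_mono1[of n m "k-1"] by simp
  moreover have "m*(k-1) < m*k" using assms by simp
  ultimately show False using assms by linarith
qed
lemma a4: fixes m n k :: nat
  assumes "n*(k-1) = m*k" "(n-1)*(k-1) \<le> m" "2\<le>m" "2<k" shows False
proof -
  obtain K where K: "k = Suc K" using assms by (cases k) auto
  have e: "n*K = m*K + m" using assms(1) K by simp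
  have "(n-1)*K = n*K - K" by (simp add: diff_mult_distrib)
  then have "m*K + m - K \<le> m" using assms(2) e K by simp
  moreover have "2*K \<le> m*K" using assms(3) mult_le_mono1 by blast
  ultimately show False using K assms by linarith
qed
theorem theorem5:
  fixes V :: "'a set" and B :: "'a set set" and k v :: nat
  assumes "steiner_2_design k v V B"
    and "\<exists>P. near_parallel_class V B P"
  shows "\<not> silver B one_BIG_adj"
proof
  assume "silver B one_BIG_adj"
  then obtain r c I where reg: "regular_graph B one_BIG_adj r"
    and sc: "silver_coloring B one_BIG_adj r c I" unfolding silver_def by blast
  have alpha: "alpha_set B one_BIG_adj I" and pc: "proper_coloring B one_BIG_adj (r+1) c"
    and rb: "\<And>x. x\<in>I \<Longrightarrow> rainbow B one_BIG_adj (r+1) c x"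
    using sc unfolding silver_coloring_def by auto
  note D = assms(1)
  note SB = st_basic[OF D]
  have IB: "I \<subseteq> B" and indI: "\<forall>x\<in>I. \<forall>y\<in>I. \<not> one_BIG_adj x y" and fI: "finite I"
    and maxI: "\<And>J. independent_set B one_BIG_adj J \<Longrightarrow> card J \<le> card I"
    using alpha unfolding alpha_set_def independent_set_def by auto
  have disjI: "\<And>x y. x\<in>I \<Longrightarrow> y\<in>I \<Longrightarrow> x\<noteq>y \<Longrightarrow> x\<inter>y={}"
    using st_adj[OF D] indI IB by blast
  have cardU: "card (\<Union>Q) = card Q * k" if "Q \<subseteq> B" "\<And>x y. x\<in>Q \<Longrightarrow> y\<in>Q \<Longrightarrow> x\<noteq>y \<Longrightarrow> x\<inter>y={}" for Q
  proof -
    have "card (\<Union>Q) = sum card Q"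
      apply (rule card_Union_disjoint)
      using that SB(8) unfolding pairwise_def disjnt_def by auto
    also have "\<dots> = sum (\<lambda>_. k) Q" apply (rule sum.cong) using that SB(6) by auto
    finally show ?thesis by simp
  qed
  obtain P where np: "near_parallel_class V B P" using assms(2) by blast
  then have PB: "P \<subseteq> B" and disjP: "\<And>x y. x\<in>P \<Longrightarrow> y\<in>P \<Longrightarrow> x\<noteq>y \<Longrightarrow> x\<inter>y={}"
    unfolding near_parallel_class_def partial_parallel_class_def by auto
  obtain x0 where x0: "x0 \<in> V" "\<Union>P = V - {x0}"
    using np unfolding near_parallel_class_def by blast
  have "independent_set B one_BIG_adj P"
    unfolding independent_set_def using PB disjP st_adj[OF D] by (metis subsetD)
  then have cPI: "card P \<le> card I" using maxI by blast
  have cP: "card P * k = v - 1" using cardU[OF PB disjP] x0 SB(1,2) by simp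
  have "\<Union>I \<subseteq> V" using IB SB(5) by blast
  then have "card (\<Union>I) \<le> v" using SB(1,2) card_mono by blast
  then have cIk: "card I * k \<le> v" using cardU[OF IB disjI] by simp
  define m where "m = card I"
  have mk: "m * k = v - 1" using a1[OF cP cPI cIk SB(3)] cP m_def by simp
  have UIV: "\<Union>I \<subseteq> V" using IB SB(5) by blast
  have "card (V - \<Union>I) = 1"
    using card_Diff_subset[OF finite_subset[OF UIV SB(1)] UIV] cardU[OF IB disjI] mk m_def SB(1-4)
    by simp
  then obtain p where pV: "V - \<Union>I = {p}" using card_1_singletonE by blast
  then have p: "p \<in> V" "p \<notin> \<Union>I" and cov: "\<And>q. q \<in> V \<Longrightarrow> q \<noteq> p \<Longrightarrow> q \<in> \<Union>I" by auto
  define Bp where "Bp = {b\<in>B. p\<in>b}"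
  define n1 where "n1 = card Bp"
  have n1e: "n1 * (k-1) = v - 1" using st_Bq[OF D p(1)] unfolding n1_def Bp_def .
  have m2: "2 \<le> m" using a2[OF mk SB(4) SB(3) n1e] .
  have mn1: "m < n1" using a3[of n1 k m] n1e mk m2 SB(3) by simp
  have BpI: "Bp \<inter> I = {}" using p(2) unfolding Bp_def by blast
  have fBp: "finite Bp" using SB(7) unfolding Bp_def by simp
  have irr: "\<not> one_BIG_adj x x" for x :: "'a set" unfolding one_BIG_adj_def by simp
  have sym: "one_BIG_adj x y = one_BIG_adj y x" for x y :: "'a set" unfolding one_BIG_adj_def by (auto simp: Int_commute)
  let ?N = "closed_nbhd B one_BIG_adj"
  have NB: "?N x \<subseteq> B" if "x \<in> B" for x using that unfolding closed_nbhd_def nbhd_def by auto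
  have fN: "finite (?N x)" if "x \<in> B" for x using NB[OF that] SB(7) finite_subset by blast
  have cN: "card (?N x) = r + 1" if "x \<in> B" for x
  proof -
    have "x \<notin> nbhd B one_BIG_adj x" using irr unfolding nbhd_def by simp
    moreover have "finite (nbhd B one_BIG_adj x)" "card (nbhd B one_BIG_adj x) = r"
      using reg that unfolding regular_graph_def by auto
    ultimately show ?thesis unfolding closed_nbhd_def by simp
  qed
  have imN: "c ` ?N x = {..<r+1}" if "x \<in> I" for x using rb[OF that] unfolding rainbow_def .
  have injN: "inj_on c (?N x)" if "x \<in> I" for x
  proof -
    have "x \<in> B" using that IB by blast
    then show ?thesis by (rule eq_card_imp_inj_on[OF fN]) (simp add: imN[OF that] cN[OF \<open>x \<in> B\<close>])
  qed
  have one_col: "card {y\<in>?N x. c y = i} = 1" if xi: "x \<in> I" "i < r+1" for x i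
  proof -
    have "i \<in> c ` ?N x" using imN[OF xi(1)] xi(2) by simp
    then obtain y0 where y0: "y0 \<in> ?N x" "c y0 = i" by blast
    have "{y\<in>?N x. c y = i} = {y0}" using y0 injN[OF xi(1)] unfolding inj_on_def by auto
    then show ?thesis by simp
  qed
  have colB: "c y < r+1" if "y \<in> B" for y using pc that unfolding proper_coloring_def by blast
  have adjc: "c y \<noteq> c z" if "y \<in> B" "z \<in> B" "one_BIG_adj y z" for y z
    using pc that unfolding proper_coloring_def by blast
  define w where "w y = (if y\<in>I then 1 else if p\<in>y then k-1 else k)" for y
  have W: "card (?N y \<inter> I) = w y" if yB: "y \<in> B" for y
  proof (cases "y \<in> I")
    case True
    have "?N y \<inter> I = {y}" using True indI unfolding closed_nbhd_def nbhd_def by auto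
    then show ?thesis using True unfolding w_def by simp
  next
    case False
    define J where "J = ?N y \<inter> I"
    have J: "J = {x\<in>I. x \<inter> y \<noteq> {}}"
    proof -
      have "x \<in> ?N y \<longleftrightarrow> x \<inter> y \<noteq> {}" if "x \<in> I" for x
      proof -
        have "x \<noteq> y" "x \<in> B" using that False IB by auto
        then show ?thesis using st_adj[OF D yB, of x] unfolding closed_nbhd_def nbhd_def by auto
      qed
      then show ?thesis unfolding J_def by auto
    qed
    have fJ: "finite J" using fI unfolding J_def by simp
    have U: "y - {p} = \<Union> ((\<lambda>x. x \<inter> y) ` J)"
    proof
      show "y - {p} \<subseteq> \<Union> ((\<lambda>x. x \<inter> y) ` J)"
      proof
        fix q assume q: "q \<in> y - {p}"
        then have "q \<in> V" using SB(5)[OF yB] by blast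
        then have "q \<in> \<Union>I" using cov q by blast
        then obtain x where "x \<in> I" "q \<in> x" by blast
        then show "q \<in> \<Union> ((\<lambda>x. x \<inter> y) ` J)" using q J by blast
      qed
      show "\<Union> ((\<lambda>x. x \<inter> y) ` J) \<subseteq> y - {p}" using J p(2) by blast
    qed
    have "card (\<Union> ((\<lambda>x. x \<inter> y) ` J)) = (\<Sum>x\<in>J. card (x \<inter> y))"
    proof (rule card_UN_disjoint)
      show "finite J" by (rule fJ)
      show "\<forall>i\<in>J. finite (i \<inter> y)" using SB(8)[OF yB] by simp
      show "\<forall>i\<in>J. \<forall>j\<in>J. i \<noteq> j \<longrightarrow> i \<inter> y \<inter> (j \<inter> y) = {}"
        using disjI J by blast
    qed
    also have "\<dots> = (\<Sum>x\<in>J. 1)"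
    proof (rule sum.cong)
      fix x assume xJ: "x \<in> J"
      then have "x \<in> B" "x \<noteq> y" "x \<inter> y \<noteq> {}" using J IB False by auto
      moreover have "finite (x \<inter> y)" using SB(8)[OF yB] by simp
      ultimately show "card (x \<inter> y) = 1" using st_inter[OF D _ yB, of x]
        by (metis One_nat_def card_0_eq le_antisym less_one not_le)
    qed simp
    finally have "card (y - {p}) = card J" using U by simp
    moreover have "card (y - {p}) = (if p \<in> y then k - 1 else k)"
      using SB(6)[OF yB] SB(8)[OF yB] by (simp add: card_Diff_singleton)
    ultimately show ?thesis using False unfolding w_def J_def by simp
  qed
  have Ceq: "(\<Sum>y\<in>{y\<in>B. c y = i}. w y) = m" if i: "i < r+1" for i
  proof -
    let ?C = "{y\<in>B. c y = i}"
    have fC: "finite ?C" using SB(7) by simp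
    have "(\<Sum>y\<in>?C. w y) = (\<Sum>y\<in>?C. card (?N y \<inter> I))" by (rule sum.cong) (auto simp: W)
    also have "\<dots> = (\<Sum>y\<in>?C. \<Sum>x\<in>I. if x \<in> ?N y then 1 else (0::nat))"
    proof (rule sum.cong)
      fix y assume "y \<in> ?C"
      have "?N y \<inter> I = {x\<in>I. x \<in> ?N y}" by auto
      then show "card (?N y \<inter> I) = (\<Sum>x\<in>I. if x \<in> ?N y then 1 else (0::nat))"
        using card_filter_sum[OF fI] by simp
    qed simp
    also have "\<dots> = (\<Sum>x\<in>I. \<Sum>y\<in>?C. if x \<in> ?N y then 1 else (0::nat))" by (rule sum.swap)
    also have "\<dots> = (\<Sum>x\<in>I. 1)"
    proof (rule sum.cong)
      fix x assume xI: "x \<in> I"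
      then have xB: "x \<in> B" using IB by blast
      have "{y\<in>?C. x \<in> ?N y} = {y\<in>?N x. c y = i}"
        using xB sym unfolding closed_nbhd_def nbhd_def by auto
      then show "(\<Sum>y\<in>?C. if x \<in> ?N y then 1 else (0::nat)) = 1"
        using card_filter_sum[OF fC, of "\<lambda>y. x \<in> ?N y"] one_col[OF xI i] by simp
    qed simp
    finally show ?thesis unfolding m_def by simp
  qed
  show False
  proof (cases "m mod k = k - 1")
    case False
    have ex: "\<exists>x\<in>I. c x = c y" if yBp: "y \<in> Bp" for y
    proof (rule ccontr)
      assume nex: "\<not> (\<exists>x\<in>I. c x = c y)"
      have yB: "y \<in> B" "p \<in> y" using yBp unfolding Bp_def by auto
      let ?C = "{z\<in>B. c z = c y}"
      have fC: "finite ?C" using SB(7) by simp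
      have yC: "y \<in> ?C" using yB by simp
      have "(\<Sum>z\<in>?C. w z) = w y + (\<Sum>z\<in>?C - {y}. w z)" using sum.remove[OF fC yC] .
      also have "(\<Sum>z\<in>?C - {y}. w z) = (\<Sum>z\<in>?C - {y}. k)"
      proof (rule sum.cong)
        fix z assume z: "z \<in> ?C - {y}"
        then have "z \<notin> I" using nex by auto
        moreover have "p \<notin> z"
        proof
          assume "p \<in> z"
          then have "one_BIG_adj y z" using st_adj[OF D yB(1), of z] z yB by auto
          then show False using adjc[OF yB(1), of z] z by auto
        qed
        ultimately show "w z = k" unfolding w_def by simp
      qed simp
      also have "w y = k - 1" using yB nex unfolding w_def by auto
      finally have "m = (k - 1) + k * card (?C - {y})" using Ceq[OF colB[OF yB(1)]] by simp
      then have "m mod k = (k-1) mod k" by simp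
      then show False using False SB(3) by simp
    qed
    define f where "f y = (SOME x. x \<in> I \<and> c x = c y)" for y
    have f: "f y \<in> I \<and> c (f y) = c y" if "y \<in> Bp" for y
      using someI_ex[OF ex[OF that, unfolded Bex_def]] unfolding f_def .
    have "inj_on f Bp"
    proof (rule inj_onI)
      fix y z assume yz: "y \<in> Bp" "z \<in> Bp" "f y = f z"
      then have "c y = c z" using f by metis
      moreover have "y \<in> B" "z \<in> B" "p \<in> y" "p \<in> z" using yz unfolding Bp_def by auto
      ultimately show "y = z" using adjc st_adj[OF D] by blast
    qed
    moreover have "f ` Bp \<subseteq> I" using f by blast
    ultimately have "n1 \<le> m" unfolding n1_def m_def using card_inj_on_le fI by blast
    then show False using mn1 by simp
  next
    case True
    have A: "k - 1 \<le> card {y\<in>I. c y = i}" if i: "i < r+1" and nBp: "\<forall>y\<in>Bp. c y \<noteq> i" for i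
    proof -
      let ?C = "{y\<in>B. c y = i}"
      have fC: "finite ?C" using SB(7) by simp
      have CI: "?C \<inter> I = {y\<in>I. c y = i}" using IB by auto
      have "m = (\<Sum>y\<in>?C. w y)" using Ceq[OF i] by simp
      also have "\<dots> = (\<Sum>y\<in>?C \<inter> I. w y) + (\<Sum>y\<in>?C - I. w y)" by (rule sum.Int_Diff[OF fC])
      also have "(\<Sum>y\<in>?C \<inter> I. w y) = (\<Sum>y\<in>?C \<inter> I. 1)" by (rule sum.cong) (auto simp: w_def)
      also have "(\<Sum>y\<in>?C - I. w y) = (\<Sum>y\<in>?C - I. k)"
        by (rule sum.cong) (use nBp in \<open>auto simp: w_def Bp_def\<close>)
      finally have "m = card {y\<in>I. c y = i} + k * card (?C - I)" using CI by simp
      then have "card {y\<in>I. c y = i} mod k = k - 1" using True by (metis mod_mult_self2)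
      then show ?thesis by (metis mod_less_eq_dividend)
    qed
    obtain x where xI: "x \<in> I" using m2 m_def by fastforce
    have xB: "x \<in> B" using xI IB by blast
    have "\<not> card x \<le> Suc 0" using SB(6)[OF xB] SB(3) by simp
    then obtain q1 q2 where q: "q1 \<in> x" "q2 \<in> x" "q1 \<noteq> q2"
      using card_le_Suc0_iff_eq[OF SB(8)[OF xB]] by blast
    have qV: "q1 \<in> V" "q2 \<in> V" using q SB(5)[OF xB] by auto
    define B1 where "B1 = {b\<in>B. q1\<in>b}"
    define B2 where "B2 = {b\<in>B. q2\<in>b}"
    have "card B1 * (k-1) = n1 * (k-1)" using st_Bq[OF D qV(1)] n1e unfolding B1_def by simp
    then have cB1: "card B1 = n1" using SB(3) by simp
    have "card B2 * (k-1) = n1 * (k-1)" using st_Bq[OF D qV(2)] n1e unfolding B2_def by simp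
    then have cB2: "card B2 = n1" using SB(3) by simp
    have fB12: "finite B1" "finite B2" using SB(7) unfolding B1_def B2_def by auto
    have B12: "B1 \<inter> B2 = {x}"
    proof
      show "B1 \<inter> B2 \<subseteq> {x}"
      proof
        fix b assume "b \<in> B1 \<inter> B2"
        then have "b \<in> B" "q1 \<in> b" "q2 \<in> b" unfolding B1_def B2_def by auto
        then have "b = x" using st_unique[OF D _ xB _ _ q(1,2,3)] by blast
        then show "b \<in> {x}" by simp
      qed
      show "{x} \<subseteq> B1 \<inter> B2" using xB q unfolding B1_def B2_def by auto
    qed
    have cU: "card (B1 \<union> B2) = 2 * n1 - 1"
      using card_Un_Int[OF fB12] B12 cB1 cB2 by simp
    have sub: "B1 \<union> B2 \<subseteq> ?N x"
    proof
      fix b assume b: "b \<in> B1 \<union> B2"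
      then have bB: "b \<in> B" unfolding B1_def B2_def by auto
      show "b \<in> ?N x"
      proof (cases "b = x")
        case True then show ?thesis unfolding closed_nbhd_def by simp
      next
        case False
        then have "one_BIG_adj x b" using st_adj[OF D xB bB] b q unfolding B1_def B2_def by auto
        then show ?thesis using bB unfolding closed_nbhd_def nbhd_def by simp
      qed
    qed
    have "card (c ` (B1 \<union> B2)) = 2 * n1 - 1"
      using card_image[OF inj_on_subset[OF injN[OF xI] sub]] cU by simp
    moreover have "card (c ` Bp) \<le> n1" using card_image_le[OF fBp] unfolding n1_def .
    moreover define T where "T = c ` (B1 \<union> B2) - c ` Bp"
    ultimately have cT: "n1 - 1 \<le> card T" using diff_card_le_card_Diff[of "c ` Bp" "c ` (B1 \<union> B2)"] fBp
      by simp
    have fT: "finite T" unfolding T_def using fB12 by simp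
    have "(\<Sum>i\<in>T. card {y\<in>I. c y = i}) = card (\<Union>i\<in>T. {y\<in>I. c y = i})"
      by (rule card_UN_disjoint[symmetric]) (use fT fI in auto)
    also have "\<dots> \<le> m" unfolding m_def by (rule card_mono[OF fI]) auto
    finally have le1: "(\<Sum>i\<in>T. card {y\<in>I. c y = i}) \<le> m" .
    have "card T * (k - 1) \<le> (\<Sum>i\<in>T. card {y\<in>I. c y = i})"
    proof -
      have "\<And>i. i \<in> T \<Longrightarrow> k - 1 \<le> card {y\<in>I. c y = i}"
      proof -
        fix i assume iT: "i \<in> T"
        then obtain b where "b \<in> B1 \<union> B2" "c b = i" unfolding T_def by blast
        then have "i < r + 1" using colB unfolding B1_def B2_def by auto
        moreover have "\<forall>y\<in>Bp. c y \<noteq> i" using iT unfolding T_def by (metis DiffD2 image_eqI)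
        ultimately show "k - 1 \<le> card {y\<in>I. c y = i}" by (rule A)
      qed
      then show ?thesis using sum_bounded_below[of T "k-1"] by simp
    qed
    then have "card T * (k-1) \<le> m" using le1 by simp
    then have "(n1 - 1) * (k-1) \<le> m" using cT mult_le_mono1 order_trans by blast
    then show False using a4[of n1 k m] n1e mk m2 SB(3) by simp
  qed
qed
end
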